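(* Let $R$ be an NC-nilpotent algebra, $\overline S\subset R_{ab}-\{0\}$ a multiplicative subset, and $S=\pi^{-1}(\overline S)\subset R$ its preimage under the abelianization map $\pi:R\to R_{ab}$. Then the Ore localization $R[S^{-1}]$ is NC-nilpotent, and for every $d\ge0$ $$\mathrm{gr}^d_F(R[S^{-1}])\cong \mathrm{gr}^d_F(R)[\overline S^{-1}],$$ where on the right is the usual module of fractions of the $R_{ab}$-module $\mathrm{gr}^d_F(R)$.
   Context: Algebras are associative unital $\mathbf{C}$-algebras. $R_{ab}=R/[R,R]$. NC-filtration: with $R^{\rm Lie}_1=R$, $R^{\rm Lie}_m=[R,R^{\rm Lie}_{m-1}]$ ($[a,b]=ab-ba$), $F^dR=\sum_m\sum_{i_1+\dots+i_m-m=d}R\,R^{\rm Lie}_{i_1}R\cdots R\,R^{\rm Lie}_{i_m}R$; $\mathrm{gr}^d_F R=F^dR/F^{d+1}R$, which is a module over $\mathrm{gr}^0_FR=R_{ab}$. $R$ is NC-nilpotent if $F^iR=0$ for $i\gg0$. For $R$ NC-nilpotent, the set $S$ satisfies the left and right Ore conditions, so the ring of fractions $R[S^{-1}]$ exists: it is equipped with a homomorphism $R\to R[S^{-1}]$ sending elements of $S$ to invertible elements and is universal with this property. *)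

theory Defs
  imports Complex_Main
begin

text \<open>An algebra is a type of class ring_1 (the whole type is the ring)
  together with a C-algebra structure, i.e. a ring homomorphism from complex into the centre.
  Quotients (R_ab, gr^d, module of fractions) are rendered via representatives.\<close>

definition complex_algebra_str :: "(complex \<Rightarrow> 'a::ring_1) \<Rightarrow> bool" where
  "complex_algebra_str \<iota> \<longleftrightarrow> \<iota> 1 = 1 \<and> (\<forall>x y. \<iota> (x + y) = \<iota> x + \<iota> y)
     \<and> (\<forall>x y. \<iota> (x * y) = \<iota> x * \<iota> y) \<and> (\<forall>c a. \<iota> c * a = a * \<iota> c)"

definition ring_hom_fun :: "('a::ring_1 \<Rightarrow> 'b::ring_1) \<Rightarrow> bool" where
  "ring_hom_fun \<phi> \<longleftrightarrow> \<phi> 1 = 1 \<and> (\<forall>a b. \<phi> (a + b) = \<phi> a + \<phi> b \<and> \<phi> (a * b) = \<phi> a * \<phi> b)"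

text \<open>Additive subgroup generated by a set (= C-linear span for the sets below,
  since they are stable under multiplication by scalars from R).\<close>
inductive_set addcl :: "'a::ab_group_add set \<Rightarrow> 'a set" for X where
  zero: "0 \<in> addcl X"
| base: "x \<in> X \<Longrightarrow> x \<in> addcl X"
| add: "x \<in> addcl X \<Longrightarrow> y \<in> addcl X \<Longrightarrow> x + y \<in> addcl X"
| neg: "x \<in> addcl X \<Longrightarrow> - x \<in> addcl X"

text \<open>lie_pow k = R^Lie_(k+1): lie_pow 0 = R, lie_pow (k+1) = [R, lie_pow k].\<close>
primrec lie_pow :: "nat \<Rightarrow> 'a::ring_1 set" where
  "lie_pow 0 = UNIV"
| "lie_pow (Suc k) = addcl {a * x - x * a | a x. x \<in> lie_pow k}"

text \<open>F^d R: span of products a0 x1 a1 x2 a2 ... xm am with x_j in R^Lie_(k_j+1),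
  m >= 1, and k_1 + ... + k_m = d (i.e. i_1+...+i_m - m = d with i_j = k_j + 1).\<close>
definition nc_filt :: "nat \<Rightarrow> 'a::ring_1 set" where
  "nc_filt d = addcl {a * prod_list (map2 (\<lambda>x b. x * b) xs bs) | a xs bs ks.
      ks \<noteq> [] \<and> length xs = length ks \<and> length bs = length ks \<and> sum_list ks = d
      \<and> (\<forall>j<length ks. xs ! j \<in> lie_pow (ks ! j))}"

definition nc_nilpotent :: "'a::ring_1 itself \<Rightarrow> bool" where
  "nc_nilpotent _ \<longleftrightarrow> (\<exists>N. \<forall>i\<ge>N. nc_filt i = ({0} :: 'a set))"

text \<open>R_ab = R / F^1 R (F^1 R is the two-sided ideal generated by commutators);
  the element pi(a) of R_ab is represented by its coset.\<close>
definition ab_class :: "'a::ring_1 \<Rightarrow> 'a set" where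
  "ab_class a = {b. b - a \<in> nc_filt 1}"

definition ab_mult_subset :: "'a::ring_1 set set \<Rightarrow> bool" where
  "ab_mult_subset Sbar \<longleftrightarrow> Sbar \<subseteq> range ab_class \<and> ab_class 0 \<notin> Sbar \<and> ab_class 1 \<in> Sbar
     \<and> (\<forall>a b. ab_class a \<in> Sbar \<longrightarrow> ab_class b \<in> Sbar \<longrightarrow> ab_class (a * b) \<in> Sbar)"

definition ab_preimage :: "'a::ring_1 set set \<Rightarrow> 'a set" where
  "ab_preimage Sbar = {s. ab_class s \<in> Sbar}"

definition ring_of_fractions :: "'a::ring_1 set \<Rightarrow> ('a \<Rightarrow> 'b::ring_1) \<Rightarrow> bool" where
  "ring_of_fractions S \<phi> \<longleftrightarrow> ring_hom_fun \<phi>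
     \<and> (\<forall>s\<in>S. \<exists>u. u * \<phi> s = 1 \<and> \<phi> s * u = 1)
     \<and> (\<forall>q. \<exists>a. \<exists>s\<in>S. q * \<phi> s = \<phi> a)
     \<and> (\<forall>a. \<phi> a = 0 \<longleftrightarrow> (\<exists>s\<in>S. a * s = 0))"

text \<open>Equality of fractions [m]/pi(s) = [m']/pi(s') in gr^d_F(R)[Sbar^{-1}]
  (m, m' in F^d R, s, s' in S): exists t in S with t(s' m - s m') in F^(d+1) R.\<close>
definition frac_rel :: "nat \<Rightarrow> 'a::ring_1 set \<Rightarrow> 'a \<times> 'a \<Rightarrow> 'a \<times> 'a \<Rightarrow> bool" where
  "frac_rel d S p p' \<longleftrightarrow> (\<exists>t\<in>S. t * (snd p' * fst p - snd p * fst p') \<in> nc_filt (Suc d))"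

text \<open>f (on representatives) induces an isomorphism of R_ab-modules
  gr^d_F(R)[Sbar^{-1}] -> gr^d_F(Q), where R_ab acts on gr^d_F(Q) through phi.\<close>
definition gr_frac_iso :: "nat \<Rightarrow> 'a::ring_1 set \<Rightarrow> ('a \<Rightarrow> 'b::ring_1) \<Rightarrow> ('a \<times> 'a \<Rightarrow> 'b) \<Rightarrow> bool" where
  "gr_frac_iso d S \<phi> f \<longleftrightarrow>
     (\<forall>m\<in>nc_filt d. \<forall>s\<in>S. f (m, s) \<in> nc_filt d)
   \<and> (\<forall>m\<in>nc_filt d. \<forall>s\<in>S. \<forall>m'\<in>nc_filt d. \<forall>s'\<in>S.
        frac_rel d S (m, s) (m', s') \<longleftrightarrow> f (m, s) - f (m', s') \<in> nc_filt (Suc d))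
   \<and> (\<forall>q\<in>nc_filt d. \<exists>m\<in>nc_filt d. \<exists>s\<in>S. f (m, s) - q \<in> nc_filt (Suc d))
   \<and> (\<forall>m\<in>nc_filt d. \<forall>s\<in>S. \<forall>m'\<in>nc_filt d. \<forall>s'\<in>S.
        f (m, s) + f (m', s') - f (s' * m + s * m', s * s') \<in> nc_filt (Suc d))
   \<and> (\<forall>a. \<forall>m\<in>nc_filt d. \<forall>s\<in>S. \<phi> a * f (m, s) - f (a * m, s) \<in> nc_filt (Suc d))"

end

theory Submission
  imports Defs
begin

lemma addcl_sub:
  assumes "X \<subseteq> Y" "0 \<in> Y" "\<And>a b. a \<in> Y \<Longrightarrow> b \<in> Y \<Longrightarrow> a + b \<in> Y" "\<And>a. a \<in> Y \<Longrightarrow> - a \<in> Y"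
  shows "addcl X \<subseteq> Y"
proof
  fix x assume "x \<in> addcl X" then show "x \<in> Y"
    by (induction rule: addcl.induct) (use assms in auto)
qed

lemma addcl_mono: "X \<subseteq> Y \<Longrightarrow> addcl X \<subseteq> addcl Y"
  by (rule addcl_sub) (auto intro: addcl.intros)

lemma addcl_diff: "x \<in> addcl X \<Longrightarrow> y \<in> addcl X \<Longrightarrow> x - y \<in> addcl X"
  using addcl.add[OF _ addcl.neg[of y]] by (metis diff_conv_add_uminus)

lemma addcl_lmult:
  fixes c :: "'a::ring_1"
  assumes "\<And>x. x \<in> X \<Longrightarrow> c * x \<in> addcl Z" "y \<in> addcl X"
  shows "c * y \<in> addcl Z"
  using assms(2) by (induction rule: addcl.induct)
    (auto simp: distrib_left intro: addcl.intros assms(1))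

lemma addcl_rmult:
  fixes c :: "'a::ring_1"
  assumes "\<And>x. x \<in> X \<Longrightarrow> x * c \<in> addcl Z" "y \<in> addcl X"
  shows "y * c \<in> addcl Z"
  using assms(2) by (induction rule: addcl.induct)
    (auto simp: distrib_right intro: addcl.intros assms(1))

lemma addcl_mult:
  fixes x :: "'a::ring_1"
  assumes "\<And>a b. a \<in> X \<Longrightarrow> b \<in> Y \<Longrightarrow> a * b \<in> addcl Z" "x \<in> addcl X" "y \<in> addcl Y"
  shows "x * y \<in> addcl Z"
proof -
  have "\<And>a. a \<in> X \<Longrightarrow> a * y \<in> addcl Z"
    by (rule addcl_lmult[OF _ assms(3)]) (rule assms(1))
  then show ?thesis by (rule addcl_rmult[OF _ assms(2)])
qed

lemma addcl_image:
  assumes add: "\<And>x y. f (x + y) = f x + f y" and "y \<in> addcl X"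
  shows "f y \<in> addcl (f ` X)"
proof -
  have f0: "f 0 = 0" using add[of 0 0] by simp
  have fn: "f (- x) = - f x" for x using add[of x "-x"] f0 by (metis add.right_inverse add_left_imp_eq)
  show ?thesis using assms(2)
    by (induction rule: addcl.induct) (auto simp: f0 fn add intro: addcl.intros)
qed

lemma lie_pow_Suc_sub: "lie_pow (Suc k) \<subseteq> (lie_pow k :: 'a::ring_1 set)"
proof (induction k)
  case 0 then show ?case by simp
next
  case (Suc k)
  show ?case unfolding lie_pow.simps(2)[of "Suc k"] lie_pow.simps(2)[of k]
    by (rule addcl_mono) (use Suc[unfolded lie_pow.simps(2)[of k]] in auto)
qed

lemma lie_pow_anti: "k' \<le> k \<Longrightarrow> lie_pow k \<subseteq> (lie_pow k' :: 'a::ring_1 set)"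
proof (induction k)
  case 0 then show ?case by simp
next
  case (Suc k) then show ?case
    using lie_pow_Suc_sub[of k] by (metis le_Suc_eq order.refl order_trans)
qed

inductive mon :: "nat \<Rightarrow> 'a::ring_1 \<Rightarrow> bool" where
  mon0: "mon 0 1"
| monS: "x \<in> lie_pow k \<Longrightarrow> mon d h \<Longrightarrow> mon (k + d) (x * b * h)"

definition Gs :: "nat \<Rightarrow> 'a::ring_1 set" where
  "Gs d = {a * h | a h. mon d h}"

lemma lists_mon:
  fixes xs bs :: "'a::ring_1 list"
  shows "length xs = length ks \<Longrightarrow> length bs = length ks \<Longrightarrow> sum_list ks = d
   \<Longrightarrow> (\<forall>j<length ks. xs ! j \<in> lie_pow (ks ! j)) \<Longrightarrow> mon d (prod_list (map2 (\<lambda>x b. x * b) xs bs))"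
proof (induction ks arbitrary: xs bs d)
  case Nil then show ?case by (simp add: mon0)
next
  case (Cons k ks)
  obtain x xs' where xs: "xs = x # xs'" using Cons.prems(1) by (cases xs) auto
  obtain b bs' where bs: "bs = b # bs'" using Cons.prems(2) by (cases bs) auto
  have x: "x \<in> lie_pow k" using Cons.prems(4) xs by force
  have "\<forall>j<length ks. xs' ! j \<in> lie_pow (ks ! j)" using Cons.prems(4) xs by force
  then have "mon (sum_list ks) (prod_list (map2 (\<lambda>x b. x * b) xs' bs'))"
    using Cons xs bs by auto
  from monS[OF x this, of b] show ?case using Cons.prems xs bs by (simp add: mult.assoc)
qed

lemma mon_lists:
  fixes h :: "'a::ring_1"
  shows "mon d h \<Longrightarrow> \<exists>xs bs ks. length xs = length ks \<and> length bs = length ks \<and> sum_list ks = d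
   \<and> (\<forall>j<length ks. xs ! j \<in> lie_pow (ks ! j)) \<and> h = prod_list (map2 (\<lambda>x b. x * b) xs bs)"
proof (induction rule: mon.induct)
  case mon0 then show ?case by (rule exI[of _ "[]"], rule exI[of _ "[]"], rule exI[of _ "[]"]) simp
next
  case (monS x k d h b)
  then obtain xs bs ks where H: "length xs = length ks" "length bs = length ks" "sum_list ks = d"
    "\<forall>j<length ks. xs ! j \<in> lie_pow (ks ! j)" "h = prod_list (map2 (\<lambda>x b. x * b) xs bs)" by blast
  have "\<forall>j<length (k#ks). (x#xs) ! j \<in> lie_pow ((k#ks) ! j)"
    using H(4) monS(1) by (auto simp: nth_Cons split: nat.split)
  then show ?case using H
    by (intro exI[of _ "x#xs"] exI[of _ "b#bs"] exI[of _ "k#ks"]) (simp add: mult.assoc)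
qed

lemma nc_filt_0: "nc_filt 0 = (UNIV :: 'a::ring_1 set)"
proof -
  have "x \<in> nc_filt 0" for x :: 'a
    unfolding nc_filt_def
    by (rule addcl.base, rule CollectI, rule exI[of _ x], rule exI[of _ "[1]"], rule exI[of _ "[1]"],
        rule exI[of _ "[0]"]) simp
  then show ?thesis by auto
qed

lemma nc_filt_alt: "nc_filt d = addcl (Gs d :: 'a::ring_1 set)"
proof
  show "nc_filt d \<subseteq> addcl (Gs d)" unfolding nc_filt_def Gs_def
    by (rule addcl_mono) (auto intro: lists_mon)
next
  show "addcl (Gs d) \<subseteq> (nc_filt d :: 'a set)"
  proof (rule addcl_sub)
    show "Gs d \<subseteq> (nc_filt d :: 'a set)"
    proof
      fix y :: 'a assume "y \<in> Gs d"
      then obtain a h where y: "y = a * h" and "mon d h" unfolding Gs_def by blast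
      then obtain xs bs ks where H: "length xs = length ks" "length bs = length ks" "sum_list ks = d"
        "\<forall>j<length ks. xs ! j \<in> lie_pow (ks ! j)" "h = prod_list (map2 (\<lambda>x b. x * b) xs bs)"
        using mon_lists by blast
      show "y \<in> nc_filt d"
      proof (cases "ks = []")
        case True then have "d = 0" using H by simp
        then show ?thesis using nc_filt_0 by auto
      next
        case False then show ?thesis unfolding nc_filt_def y
          by (intro addcl.base CollectI exI[of _ a] exI[of _ xs] exI[of _ bs] exI[of _ ks]) (use H in auto)
      qed
    qed
  qed (auto simp: nc_filt_def intro: addcl.intros)
qed


lemma mon_rmult: "mon i (h::'a::ring_1) \<Longrightarrow> \<exists>a' h'. h * c = a' * h' \<and> mon i h'"
proof (induction arbitrary: c rule: mon.induct)
  case mon0 then show ?case by (intro exI[of _ c] exI[of _ 1]) (simp add: mon.mon0)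
next
  case (monS x k d h b)
  obtain a' h' where "h * c = a' * h'" "mon d h'" using monS.IH by blast
  then show ?case using mon.monS[OF monS(1) \<open>mon d h'\<close>, of "b * a'"]
    by (intro exI[of _ 1] exI[of _ "x * (b * a') * h'"]) (simp add: mult.assoc)
qed

lemma mon_mult: "mon i (h::'a::ring_1) \<Longrightarrow> mon j h' \<Longrightarrow> mon (i + j) (h * h')"
proof (induction rule: mon.induct)
  case mon0 then show ?case by simp
next
  case (monS x k d h b)
  then show ?case using mon.monS[OF monS(1) monS.IH[OF monS.prems], of b]
    by (simp add: mult.assoc add.assoc)
qed

lemma mon_lie: "x \<in> lie_pow k \<Longrightarrow> mon k (x * b)"
  using mon.monS[OF _ mon0, of x k b] by simp

lemma mon_anti: "mon i (h::'a::ring_1) \<Longrightarrow> j \<le> i \<Longrightarrow> mon j h"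
proof (induction arbitrary: j rule: mon.induct)
  case mon0 then show ?case by (simp add: mon.mon0)
next
  case (monS x k d h b)
  define k' where "k' = min k j"
  have x: "x \<in> lie_pow k'" using monS(1) lie_pow_anti[of k' k] k'_def by auto
  have "mon (j - k') h" using monS k'_def by auto
  from mon.monS[OF x this, of b] show ?case using k'_def by simp
qed

lemma Gs_lmult: "y \<in> Gs d \<Longrightarrow> c * y \<in> Gs d"
proof -
  assume "y \<in> Gs d"
  then obtain a h where "y = a * h" "mon d h" unfolding Gs_def by blast
  moreover have "c * y = (c * a) * h" using \<open>y = a * h\<close> by (simp add: mult.assoc)
  ultimately show ?thesis unfolding Gs_def by blast
qed

lemma Gs_rmult: "y \<in> Gs d \<Longrightarrow> y * c \<in> Gs d"
proof -
  assume "y \<in> Gs d"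
  then obtain a h where "y = a * h" "mon d h" unfolding Gs_def by blast
  moreover obtain a' h' where "h * c = a' * h'" "mon d h'" using mon_rmult[OF \<open>mon d h\<close>] by blast
  ultimately have "y * c = (a * a') * h'" "mon d h'" by (auto simp: mult.assoc)
  then show ?thesis unfolding Gs_def by blast
qed

lemma Gs_mult: "y \<in> Gs i \<Longrightarrow> z \<in> Gs j \<Longrightarrow> y * z \<in> Gs (i + j)"
proof -
  assume "y \<in> Gs i" "z \<in> Gs j"
  then obtain a h a2 h2 where "y = a * h" "mon i h" "z = a2 * h2" "mon j h2" unfolding Gs_def by blast
  moreover obtain a' h' where "h * a2 = a' * h'" "mon i h'" using mon_rmult[OF \<open>mon i h\<close>] by blast
  ultimately have "y * z = (a * a') * (h' * h2)" "mon (i + j) (h' * h2)"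
    by (auto simp: mult.assoc intro: mon_mult) (metis mult.assoc)
  then show ?thesis unfolding Gs_def by blast
qed

lemma F_lmult: "y \<in> nc_filt d \<Longrightarrow> c * y \<in> (nc_filt d :: 'a::ring_1 set)"
  unfolding nc_filt_alt by (rule addcl_lmult) (auto intro: addcl.base Gs_lmult)

lemma F_rmult: "y \<in> nc_filt d \<Longrightarrow> y * c \<in> (nc_filt d :: 'a::ring_1 set)"
  unfolding nc_filt_alt by (rule addcl_rmult) (auto intro: addcl.base Gs_rmult)

lemma F_mult: "y \<in> nc_filt i \<Longrightarrow> z \<in> nc_filt j \<Longrightarrow> y * z \<in> (nc_filt (i + j) :: 'a::ring_1 set)"
  unfolding nc_filt_alt by (rule addcl_mult) (auto intro: addcl.base Gs_mult)

lemma F_add: "y \<in> nc_filt d \<Longrightarrow> z \<in> nc_filt d \<Longrightarrow> y + z \<in> (nc_filt d :: 'a::ring_1 set)"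
  unfolding nc_filt_alt by (rule addcl.add)

lemma F_neg: "y \<in> nc_filt d \<Longrightarrow> - y \<in> (nc_filt d :: 'a::ring_1 set)"
  unfolding nc_filt_alt by (rule addcl.neg)

lemma F_diff: "y \<in> nc_filt d \<Longrightarrow> z \<in> nc_filt d \<Longrightarrow> y - z \<in> (nc_filt d :: 'a::ring_1 set)"
  unfolding nc_filt_alt by (rule addcl_diff)

lemma F_zero: "0 \<in> (nc_filt d :: 'a::ring_1 set)"
  unfolding nc_filt_alt by (rule addcl.zero)

lemma mon_F: "mon d h \<Longrightarrow> a * h \<in> (nc_filt d :: 'a::ring_1 set)"
  unfolding nc_filt_alt Gs_def by (auto intro: addcl.base)

lemma F_anti: "j \<le> i \<Longrightarrow> nc_filt i \<subseteq> (nc_filt j :: 'a::ring_1 set)"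
  unfolding nc_filt_alt Gs_def by (rule addcl_mono) (auto intro: mon_anti)

lemma comm_lie: "x \<in> lie_pow k \<Longrightarrow> x * r - r * x \<in> (lie_pow (Suc k) :: 'a::ring_1 set)"
proof -
  assume "x \<in> lie_pow k"
  then have "r * x - x * r \<in> lie_pow (Suc k)" by (auto intro: addcl.base)
  from addcl.neg[OF this[unfolded lie_pow.simps]] show ?thesis by simp
qed

lemma comm_lie1: "b * r - r * b \<in> (lie_pow 1 :: 'a::ring_1 set)"
  unfolding One_nat_def lie_pow.simps by (auto intro!: addcl.base)

lemma mon_comm: "mon d (h::'a::ring_1) \<Longrightarrow> h * r - r * h \<in> nc_filt (Suc d)"
proof (induction rule: mon.induct)
  case mon0 then show ?case by (simp add: F_zero)
next
  case (monS x k d h b)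
  have eq: "x * b * h * r - r * (x * b * h) =
     (x * r - r * x) * b * h + x * 1 * ((b * r - r * b) * 1 * h) + (x * b) * (h * r - r * h)"
    by (simp add: algebra_simps)
  have "mon (Suc k + d) ((x * r - r * x) * b * h)"
    by (rule mon.monS[OF comm_lie[OF monS(1)] monS(2)])
  from mon_F[OF this, of 1] have t1: "(x * r - r * x) * b * h \<in> nc_filt (Suc (k + d))" by simp
  have "mon (k + (1 + d)) (x * 1 * ((b * r - r * b) * 1 * h))"
    by (intro mon.monS monS(1) comm_lie1 monS(2))
  from mon_F[OF this, of 1] have t2: "x * 1 * ((b * r - r * b) * 1 * h) \<in> nc_filt (Suc (k + d))" by simp
  have "x * b \<in> nc_filt k" using mon_F[OF mon_lie[OF monS(1)], of 1] by simp
  from F_mult[OF this monS.IH] have t3: "(x * b) * (h * r - r * h) \<in> nc_filt (Suc (k + d))" by simp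
  show ?case unfolding eq by (intro F_add t1 t2 t3)
qed

lemma F_comm: "m \<in> nc_filt d \<Longrightarrow> m * r - r * m \<in> (nc_filt (Suc d) :: 'a::ring_1 set)"
proof -
  assume "m \<in> nc_filt d"
  then have "m \<in> addcl (Gs d)" by (simp add: nc_filt_alt)
  then show ?thesis
  proof (induction rule: addcl.induct)
    case zero then show ?case by (simp add: F_zero)
  next
    case (base y)
    then obtain a h where y: "y = a * h" "mon d h" unfolding Gs_def by blast
    have eq: "a * h * r - r * (a * h) = a * (h * r - r * h) + (a * r - r * a) * 1 * h"
      by (simp add: algebra_simps)
    have "mon (1 + d) ((a * r - r * a) * 1 * h)"
      by (intro mon.monS comm_lie1 y(2))
    from mon_F[OF this, of 1] have "(a * r - r * a) * 1 * h \<in> nc_filt (Suc d)" by simp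
    moreover have "a * (h * r - r * h) \<in> nc_filt (Suc d)" by (rule F_lmult[OF mon_comm[OF y(2)]])
    ultimately show ?case unfolding y eq by (intro F_add)
  next
    case (add x y)
    have "(x + y) * r - r * (x + y) = (x * r - r * x) + (y * r - r * y)" by (simp add: algebra_simps)
    then show ?case using add by (simp add: F_add)
  next
    case (neg x)
    have "(- x) * r - r * (- x) = - (x * r - r * x)" by (simp add: algebra_simps)
    then show ?case using F_neg[OF neg.IH] by simp
  qed
qed

lemma hom_lie: "ring_hom_fun \<phi> \<Longrightarrow> x \<in> lie_pow k \<Longrightarrow> \<phi> x \<in> lie_pow k"
proof (induction k arbitrary: x)
  case 0 then show ?case by simp
next
  case (Suc k)
  have add: "\<phi> (a + b) = \<phi> a + \<phi> b" for a b using Suc.prems(1) unfolding ring_hom_fun_def by blast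
  have mul: "\<phi> (a * b) = \<phi> a * \<phi> b" for a b using Suc.prems(1) unfolding ring_hom_fun_def by blast
  have sub: "\<phi> (a - b) = \<phi> a - \<phi> b" for a b
    using add[of "a - b" b] by (simp add: eq_diff_eq)
  from addcl_image[OF add Suc.prems(2)[unfolded lie_pow.simps]]
  have "\<phi> x \<in> addcl (\<phi> ` {a * x - x * a |a x. x \<in> lie_pow k})" .
  moreover have "addcl (\<phi> ` {a * x - x * a |a x. x \<in> lie_pow k}) \<subseteq> lie_pow (Suc k)"
    unfolding lie_pow.simps
  proof (rule addcl_mono, rule subsetI)
    fix z assume "z \<in> \<phi> ` {a * x - x * a |a x. x \<in> lie_pow k}"
    then obtain a y where "z = \<phi> (a * y - y * a)" "y \<in> lie_pow k" by blast
    then have "z = \<phi> a * \<phi> y - \<phi> y * \<phi> a" "\<phi> y \<in> lie_pow k" using Suc.IH[OF Suc.prems(1)] by (auto simp: sub mul)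
    then show "z \<in> {a * x - x * a |a x. x \<in> lie_pow k}" by blast
  qed
  ultimately show ?case by blast
qed

lemma hom_mon: assumes "mon d h" "ring_hom_fun \<phi>" shows "mon d (\<phi> h)"
  using assms proof (induction rule: mon.induct)
  case mon0 then show ?case by (simp add: ring_hom_fun_def mon.mon0)
next
  case (monS x k d h b)
  have "\<phi> (x * b * h) = \<phi> x * \<phi> b * \<phi> h" using monS.prems unfolding ring_hom_fun_def by simp
  then show ?case using mon.monS[OF hom_lie[OF monS.prems monS(1)] monS.IH[OF monS.prems]] by simp
qed

lemma hom_F: "ring_hom_fun \<phi> \<Longrightarrow> m \<in> nc_filt d \<Longrightarrow> \<phi> m \<in> nc_filt d"
proof -
  assume h: "ring_hom_fun \<phi>" and "m \<in> nc_filt d"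
  have add: "\<phi> (a + b) = \<phi> a + \<phi> b" for a b using h unfolding ring_hom_fun_def by blast
  from addcl_image[OF add \<open>m \<in> nc_filt d\<close>[unfolded nc_filt_alt]]
  have "\<phi> m \<in> addcl (\<phi> ` Gs d)" .
  moreover have "addcl (\<phi> ` Gs d) \<subseteq> addcl (Gs d)"
  proof (rule addcl_mono, rule subsetI)
    fix z assume "z \<in> \<phi> ` Gs d"
    then obtain a h0 where "z = \<phi> (a * h0)" "mon d h0" unfolding Gs_def by blast
    then have "z = \<phi> a * \<phi> h0" "mon d (\<phi> h0)" using h hom_mon[of d h0 \<phi>] unfolding ring_hom_fun_def by auto
    then show "z \<in> Gs d" unfolding Gs_def by blast
  qed
  ultimately show ?thesis by (auto simp: nc_filt_alt)
qed


section \<open>Localization\<close>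

locale loc =
  fixes \<phi> :: "'a::ring_1 \<Rightarrow> 'b::ring_1" and S :: "'a set" and N :: nat
  assumes hom: "ring_hom_fun \<phi>"
    and invs: "\<And>s. s \<in> S \<Longrightarrow> \<exists>u. u * \<phi> s = 1 \<and> \<phi> s * u = 1"
    and frac: "\<And>q. \<exists>a. \<exists>s\<in>S. q * \<phi> s = \<phi> a"
    and ker: "\<And>a. \<phi> a = 0 \<Longrightarrow> \<exists>s\<in>S. a * s = 0"
    and Smult: "\<And>s t. s \<in> S \<Longrightarrow> t \<in> S \<Longrightarrow> s * t \<in> S"
    and S1: "1 \<in> S"
    and nilp: "\<And>i. i \<ge> N \<Longrightarrow> nc_filt i = ({0} :: 'a set)"
begin

lemma ph1: "\<phi> 1 = 1" and phadd: "\<phi> (a + b) = \<phi> a + \<phi> b" and phmul: "\<phi> (a * b) = \<phi> a * \<phi> b"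
  using hom unfolding ring_hom_fun_def by auto

lemma ph0: "\<phi> 0 = 0" using phadd[of 0 0] by simp

lemma phsub: "\<phi> (a - b) = \<phi> a - \<phi> b"
  using phadd[of "a - b" b] by (simp add: eq_diff_eq)

lemma phneg: "\<phi> (- a) = - \<phi> a"
  using phsub[of 0 a] ph0 by simp

definition iv :: "'a \<Rightarrow> 'b" where "iv s = (SOME u. u * \<phi> s = 1 \<and> \<phi> s * u = 1)"

lemma iv: "s \<in> S \<Longrightarrow> iv s * \<phi> s = 1" "s \<in> S \<Longrightarrow> \<phi> s * iv s = 1"
  unfolding iv_def using someI_ex[OF invs] by blast+

lemma iv_mult: "s \<in> S \<Longrightarrow> t \<in> S \<Longrightarrow> iv (s * t) = iv t * iv s"
proof -
  assume st: "s \<in> S" "t \<in> S"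
  have "iv (s * t) = iv (s * t) * (\<phi> (s * t) * (iv t * iv s))"
  proof -
    have "\<phi> (s * t) * (iv t * iv s) = \<phi> s * (\<phi> t * iv t) * iv s" by (simp add: phmul mult.assoc)
    also have "\<dots> = 1" using iv st by simp
    finally show ?thesis by simp
  qed
  also have "\<dots> = iv t * iv s" using iv(1)[OF Smult[OF st]] by (simp add: mult.assoc[symmetric])
  finally show ?thesis .
qed

definition T :: "nat \<Rightarrow> 'b set" where
  "T d = {q. \<exists>s\<in>S. \<exists>m\<in>nc_filt d. q * \<phi> s = \<phi> m}"

lemma T_repr: "q \<in> T d \<Longrightarrow> \<exists>s\<in>S. \<exists>m\<in>nc_filt d. q = \<phi> m * iv s"
proof -
  assume "q \<in> T d"
  then obtain s m where sm: "s \<in> S" "m \<in> nc_filt d" "q * \<phi> s = \<phi> m" unfolding T_def by blast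
  then have "q = \<phi> m * iv s" using iv(2)[OF sm(1)] by (metis mult.assoc mult.right_neutral)
  then show ?thesis using sm by blast
qed

lemma T_intro: "m \<in> nc_filt d \<Longrightarrow> s \<in> S \<Longrightarrow> \<phi> m * iv s \<in> T d"
  unfolding T_def using iv(1) by (force simp: mult.assoc)

lemma T_phi: "m \<in> nc_filt d \<Longrightarrow> \<phi> m \<in> T d"
  unfolding T_def using S1 by (force simp: ph1)

lemma T_0: "T 0 = UNIV"
  unfolding T_def nc_filt_0 using frac by blast

lemma T_rmult: "q \<in> T d \<Longrightarrow> q * p \<in> T d"
proof -
  assume "q \<in> T d"
  then obtain s m where sm: "s \<in> S" "m \<in> nc_filt d" "q = \<phi> m * iv s" using T_repr by blast
  obtain a t where at: "t \<in> S" "iv s * p * \<phi> t = \<phi> a" using frac by blast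
  have "q * p * \<phi> t = \<phi> (m * a)" using sm(3) at(2) by (simp add: phmul mult.assoc)
  then show ?thesis unfolding T_def using at(1) F_rmult[OF sm(2)] by blast
qed

lemma T_lmult_phi: "q \<in> T d \<Longrightarrow> \<phi> a * q \<in> T d"
proof -
  assume "q \<in> T d"
  then obtain s m where sm: "s \<in> S" "m \<in> nc_filt d" "q * \<phi> s = \<phi> m" unfolding T_def by blast
  then have "\<phi> a * q * \<phi> s = \<phi> (a * m)" by (simp add: phmul mult.assoc)
  then show ?thesis unfolding T_def using sm(1) F_lmult[OF sm(2)] by blast
qed

lemma T_zero: "0 \<in> T d"
  using T_phi[OF F_zero] ph0 by simp

lemma T_neg: "q \<in> T d \<Longrightarrow> - q \<in> T d"
proof -
  assume "q \<in> T d"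
  then obtain s m where sm: "s \<in> S" "m \<in> nc_filt d" "q * \<phi> s = \<phi> m" unfolding T_def by blast
  then have "- q * \<phi> s = \<phi> (- m)" by (simp add: phneg)
  then show ?thesis unfolding T_def using sm(1) F_neg[OF sm(2)] by blast
qed

lemma T_add: "q1 \<in> T d \<Longrightarrow> q2 \<in> T d \<Longrightarrow> q1 + q2 \<in> T d"
proof -
  assume q1: "q1 \<in> T d" and q2: "q2 \<in> T d"
  then obtain s1 m1 where sm: "s1 \<in> S" "m1 \<in> nc_filt d" "q1 * \<phi> s1 = \<phi> m1" unfolding T_def by blast
  have "q2 * \<phi> s1 \<in> T d" by (rule T_rmult[OF q2])
  then obtain u m3 where um: "u \<in> S" "m3 \<in> nc_filt d" "q2 * \<phi> s1 * \<phi> u = \<phi> m3" unfolding T_def by blast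
  have "(q1 + q2) * \<phi> (s1 * u) = \<phi> (m1 * u + m3)"
    using sm(3) um(3) by (simp add: phmul phadd distrib_right mult.assoc[symmetric])
  moreover have "m1 * u + m3 \<in> nc_filt d" by (intro F_add F_rmult sm(2) um(2))
  ultimately show ?thesis unfolding T_def using Smult[OF sm(1) um(1)] by blast
qed

lemma T_diff: "q1 \<in> T d \<Longrightarrow> q2 \<in> T d \<Longrightarrow> q1 - q2 \<in> T d"
  using T_add[OF _ T_neg] by (metis diff_conv_add_uminus)

lemma T_anti: "j \<le> i \<Longrightarrow> T i \<subseteq> T j"
  unfolding T_def using F_anti by blast

lemma T_big: "i \<ge> N \<Longrightarrow> T i = {0}"
proof -
  assume "i \<ge> N"
  have "q = 0" if qT: "q \<in> T i" for q
  proof -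
    obtain s m where sm: "s \<in> S" "m \<in> nc_filt i" "q = \<phi> m * iv s" using T_repr[OF qT] by blast
    then show ?thesis using nilp[OF \<open>i \<ge> N\<close>] ph0 by simp
  qed
  then show ?thesis using T_zero by blast
qed

lemma P_step:
  assumes IH: "\<And>m t. m \<in> nc_filt (Suc d) \<Longrightarrow> t \<in> S \<Longrightarrow> iv t * \<phi> m \<in> T (Suc d)"
    and m: "m \<in> nc_filt d" and t: "t \<in> S"
  shows "iv t * \<phi> m \<in> T d"
proof -
  have eq: "iv t * \<phi> m = \<phi> m * iv t + iv t * \<phi> (m * t - t * m) * iv t"
  proof -
    have "iv t * \<phi> (m * t - t * m) * iv t = iv t * \<phi> m * (\<phi> t * iv t) - (iv t * \<phi> t) * \<phi> m * iv t"
      by (simp add: phsub phmul algebra_simps)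
    also have "\<dots> = iv t * \<phi> m - \<phi> m * iv t" using iv[OF t] by simp
    finally show ?thesis by simp
  qed
  have "iv t * \<phi> (m * t - t * m) * iv t \<in> T (Suc d)"
    by (rule T_rmult[OF IH[OF F_comm[OF m] t]])
  then have "iv t * \<phi> (m * t - t * m) * iv t \<in> T d" using T_anti[of d "Suc d"] by auto
  then show ?thesis unfolding eq by (intro T_add T_intro m t)
qed

lemma P: "m \<in> nc_filt d \<Longrightarrow> t \<in> S \<Longrightarrow> iv t * \<phi> m \<in> T d"
proof -
  have big: "\<forall>m t. m \<in> nc_filt d \<longrightarrow> t \<in> S \<longrightarrow> iv t * \<phi> m \<in> T d" if "d \<ge> N" for d
    using nilp[OF that] ph0 T_zero by auto
  have "\<forall>m t. m \<in> nc_filt d \<longrightarrow> t \<in> S \<longrightarrow> iv t * \<phi> m \<in> T d"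
  proof (cases "d \<ge> N")
    case True then show ?thesis using big by blast
  next
    case False
    then have "d \<le> N" by simp
    then show ?thesis
    proof (induction rule: inc_induct)
      case base then show ?case using big by blast
    next
      case (step n) then show ?case using P_step by blast
    qed
  qed
  then show "m \<in> nc_filt d \<Longrightarrow> t \<in> S \<Longrightarrow> iv t * \<phi> m \<in> T d" by blast
qed

lemma T_lmult: "q \<in> T d \<Longrightarrow> p * q \<in> T d"
proof -
  assume "q \<in> T d"
  then obtain s m where sm: "s \<in> S" "m \<in> nc_filt d" "q = \<phi> m * iv s" using T_repr by blast
  obtain a t where at: "t \<in> S" "p * \<phi> t = \<phi> a" using frac by blast
  have p: "p = \<phi> a * iv t" using at iv(2)[OF at(1)] by (metis mult.assoc mult.right_neutral)
  have "p * q = \<phi> a * ((iv t * \<phi> m) * iv s)" using p sm(3) by (simp add: mult.assoc)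
  then show ?thesis using T_lmult_phi[OF T_rmult[OF P[OF sm(2) at(1)]]] by simp
qed

lemma T_mult: "q1 \<in> T i \<Longrightarrow> q2 \<in> T j \<Longrightarrow> q1 * q2 \<in> T (i + j)"
proof -
  assume q1: "q1 \<in> T i" and q2: "q2 \<in> T j"
  obtain s1 m1 where sm: "s1 \<in> S" "m1 \<in> nc_filt i" "q1 = \<phi> m1 * iv s1" using T_repr[OF q1] by blast
  have "iv s1 * q2 \<in> T j" by (rule T_lmult[OF q2])
  then obtain u m2 where um: "u \<in> S" "m2 \<in> nc_filt j" "iv s1 * q2 * \<phi> u = \<phi> m2" unfolding T_def by blast
  have "q1 * q2 * \<phi> u = \<phi> (m1 * m2)" using sm(3) um(3) by (simp add: phmul mult.assoc)
  then show ?thesis unfolding T_def using um(1) F_mult[OF sm(2) um(2)] by blast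
qed

lemma T_comm_phi: "m \<in> nc_filt k \<Longrightarrow> p * \<phi> m - \<phi> m * p \<in> T (Suc k)"
proof -
  assume m: "m \<in> nc_filt k"
  obtain a t where at: "t \<in> S" "p * \<phi> t = \<phi> a" using frac by blast
  define w where "w = iv t"
  have p: "p = \<phi> a * w" using at iv(2)[OF at(1)] unfolding w_def by (metis mult.assoc mult.right_neutral)
  have e1: "w * \<phi> m - \<phi> m * w = w * \<phi> (m * t - t * m) * w"
  proof -
    have "w * \<phi> (m * t - t * m) * w = w * \<phi> m * (\<phi> t * w) - (w * \<phi> t) * \<phi> m * w"
      by (simp add: phsub phmul algebra_simps)
    also have "\<dots> = w * \<phi> m - \<phi> m * w" using iv[OF at(1)] unfolding w_def by simp
    finally show ?thesis by simp
  qed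
  have e2: "p * \<phi> m - \<phi> m * p = \<phi> a * (w * \<phi> m - \<phi> m * w) - \<phi> (m * a - a * m) * w"
    unfolding p by (simp add: phsub phmul algebra_simps)
  have "\<phi> a * (w * \<phi> m - \<phi> m * w) \<in> T (Suc k)"
    unfolding e1 by (intro T_lmult T_rmult T_phi F_comm m)
  moreover have "\<phi> (m * a - a * m) * w \<in> T (Suc k)"
    by (intro T_rmult T_phi F_comm m)
  ultimately show ?thesis unfolding e2 by (rule T_diff)
qed

lemma T_comm: "q \<in> T k \<Longrightarrow> p * q - q * p \<in> T (Suc k)"
proof -
  assume q: "q \<in> T k"
  obtain s m where sm: "s \<in> S" "m \<in> nc_filt k" "q = \<phi> m * iv s" using T_repr[OF q] by blast
  define v where "v = iv s"
  have X: "p * \<phi> s - \<phi> s * p \<in> T (Suc 0)"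
    by (rule T_comm_phi) (simp add: nc_filt_0)
  have e: "p * q - q * p = (p * \<phi> m - \<phi> m * p) * v - q * (p * \<phi> s - \<phi> s * p) * v"
  proof -
    have "q * (p * \<phi> s - \<phi> s * p) * v = \<phi> m * v * p * (\<phi> s * v) - \<phi> m * (v * \<phi> s) * p * v"
      using sm(3) unfolding v_def by (simp add: algebra_simps)
    also have "\<dots> = \<phi> m * v * p - \<phi> m * p * v" using iv[OF sm(1)] unfolding v_def by simp
    finally show ?thesis using sm(3) unfolding v_def by (simp add: algebra_simps)
  qed
  have "q * (p * \<phi> s - \<phi> s * p) \<in> T (k + Suc 0)" by (rule T_mult[OF q X])
  then have "q * (p * \<phi> s - \<phi> s * p) * v \<in> T (Suc k)" using T_rmult by simp
  moreover have "(p * \<phi> m - \<phi> m * p) * v \<in> T (Suc k)" by (intro T_rmult T_comm_phi sm(2))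
  ultimately show ?thesis unfolding e by (intro T_diff)
qed

lemma lie_T: "x \<in> lie_pow k \<Longrightarrow> x \<in> T k"
proof (induction k arbitrary: x)
  case 0 then show ?case by (simp add: T_0)
next
  case (Suc k)
  have "addcl {a * x - x * a |a x. x \<in> lie_pow k} \<subseteq> T (Suc k)"
    by (rule addcl_sub) (auto intro: T_comm Suc.IH T_zero T_add T_neg)
  then show ?case using Suc.prems by auto
qed

lemma mon_T: "mon d h \<Longrightarrow> h \<in> T d"
proof (induction rule: mon.induct)
  case mon0 then show ?case by (simp add: T_0)
next
  case (monS x k d h b)
  show ?case by (intro T_mult T_rmult lie_T monS)
qed

lemma FQ: "nc_filt d = T d"
proof
  show "nc_filt d \<subseteq> T d" unfolding nc_filt_alt
    by (rule addcl_sub) (auto simp: Gs_def intro: T_lmult mon_T T_zero T_add T_neg)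
next
  show "T d \<subseteq> nc_filt d"
  proof
    fix q assume "q \<in> T d"
    then obtain s m where sm: "s \<in> S" "m \<in> nc_filt d" "q = \<phi> m * iv s" using T_repr by blast
    then show "q \<in> nc_filt d" using F_rmult[OF hom_F[OF hom sm(2)]] by simp
  qed
qed


lemma nilQ: "nc_nilpotent TYPE('b)"
  unfolding nc_nilpotent_def using FQ T_big by blast

lemma phiT:
  assumes x: "x \<in> nc_filt d"
  shows "\<phi> x \<in> T (Suc d) \<longleftrightarrow> (\<exists>t\<in>S. t * x \<in> nc_filt (Suc d))"
proof
  assume "\<phi> x \<in> T (Suc d)"
  then obtain u m where um: "u \<in> S" "m \<in> nc_filt (Suc d)" "\<phi> x * \<phi> u = \<phi> m" unfolding T_def by blast
  then have "\<phi> (x * u - m) = 0" by (simp add: phsub phmul)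
  then obtain v where v: "v \<in> S" "(x * u - m) * v = 0" using ker by blast
  then have xw: "x * (u * v) = m * v" by (simp add: algebra_simps mult.assoc)
  have "x * (u * v) \<in> nc_filt (Suc d)" unfolding xw by (rule F_rmult[OF um(2)])
  then have "x * (u * v) - (x * (u * v) - (u * v) * x) \<in> nc_filt (Suc d)"
    by (intro F_diff F_comm x)
  then show "\<exists>t\<in>S. t * x \<in> nc_filt (Suc d)" using Smult[OF um(1) v(1)] by auto
next
  assume "\<exists>t\<in>S. t * x \<in> nc_filt (Suc d)"
  then obtain t where t: "t \<in> S" "t * x \<in> nc_filt (Suc d)" by blast
  have "\<phi> x = iv t * \<phi> (t * x)" using iv(1)[OF t(1)] by (simp add: phmul mult.assoc[symmetric])
  then show "\<phi> x \<in> T (Suc d)" using T_lmult[OF T_phi[OF t(2)]] by simp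
qed

lemma comm_T_back: "y \<in> T d \<Longrightarrow> p * y = (p * y - y * p) + y * p" by simp

lemma iso: "gr_frac_iso d S \<phi> (\<lambda>(m, s). \<phi> m * iv s)"
  unfolding gr_frac_iso_def FQ
proof (intro conjI ballI allI)
  fix m s :: 'a assume "m \<in> nc_filt d" "s \<in> S"
  then show "(case (m, s) of (m, s) \<Rightarrow> \<phi> m * iv s) \<in> T d" by (simp add: T_intro)
next
  fix q :: 'b assume "q \<in> T d"
  then obtain s m where sm: "s \<in> S" "m \<in> nc_filt d" "q = \<phi> m * iv s" using T_repr by blast
  then show "\<exists>m\<in>nc_filt d. \<exists>s\<in>S. (case (m, s) of (m, s) \<Rightarrow> \<phi> m * iv s) - q \<in> T (Suc d)"
    using T_zero by force
next
  fix a m s :: 'a assume "m \<in> nc_filt d" "s \<in> S"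
  show "\<phi> a * (case (m, s) of (m, s) \<Rightarrow> \<phi> m * iv s) - (case (a * m, s) of (m, s) \<Rightarrow> \<phi> m * iv s) \<in> T (Suc d)"
    using T_zero by (simp add: phmul mult.assoc)
next
  fix m s m' s' :: 'a assume m: "m \<in> nc_filt d" and s: "s \<in> S" and m': "m' \<in> nc_filt d" and s': "s' \<in> S"
  have A: "\<phi> m * iv s - \<phi> (s' * m) * iv (s * s') \<in> T (Suc d)"
  proof -
    define z where "z = \<phi> m * iv s'"
    have z: "z \<in> T d" unfolding z_def by (rule T_intro[OF m s'])
    have zs: "z * \<phi> s' = \<phi> m" unfolding z_def using iv(1)[OF s'] by (simp add: mult.assoc)
    have "\<phi> m * iv s - \<phi> (s' * m) * iv (s * s') = - ((\<phi> s' * z - z * \<phi> s') * iv s)"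
      unfolding iv_mult[OF s s'] using zs unfolding z_def by (simp add: phmul algebra_simps)
    then show ?thesis using T_neg[OF T_rmult[OF T_comm[OF z]]] by simp
  qed
  have B: "\<phi> m' * iv s' - \<phi> (s * m') * iv (s * s') \<in> T (Suc d)"
  proof -
    define y where "y = \<phi> m' * iv s'"
    have y: "y \<in> T d" unfolding y_def by (rule T_intro[OF m' s'])
    have "\<phi> m' * iv s' - \<phi> (s * m') * iv (s * s') = - ((\<phi> s * y - y * \<phi> s) * iv s)"
      unfolding iv_mult[OF s s'] y_def using iv(2)[OF s] by (simp add: phmul algebra_simps)
    then show ?thesis using T_neg[OF T_rmult[OF T_comm[OF y]]] by simp
  qed
  show "(case (m, s) of (m, s) \<Rightarrow> \<phi> m * iv s) + (case (m', s') of (m, s) \<Rightarrow> \<phi> m * iv s) -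
       (case (s' * m + s * m', s * s') of (m, s) \<Rightarrow> \<phi> m * iv s) \<in> T (Suc d)"
    using T_add[OF A B] by (simp add: phadd algebra_simps)
next
  fix m s m' s' :: 'a assume m: "m \<in> nc_filt d" and s: "s \<in> S" and m': "m' \<in> nc_filt d" and s': "s' \<in> S"
  define D where "D = \<phi> m * iv s - \<phi> m' * iv s'"
  define x where "x = s' * m - s * m'"
  have x: "x \<in> nc_filt d" unfolding x_def by (intro F_diff F_lmult m m')
  define y1 where "y1 = \<phi> s' * \<phi> m * iv s"
  have y1: "y1 \<in> T d" unfolding y1_def using T_lmult[OF T_intro[OF m s]] by (simp add: mult.assoc)
  have y1s: "y1 * \<phi> s = \<phi> s' * \<phi> m" unfolding y1_def using iv(1)[OF s] by (simp add: mult.assoc)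
  define y2 where "y2 = \<phi> m' * iv s'"
  have y2: "y2 \<in> T d" unfolding y2_def by (rule T_intro[OF m' s'])
  have y2s: "y2 * \<phi> s' = \<phi> m'" unfolding y2_def using iv(1)[OF s'] by (simp add: mult.assoc)
  have E: "\<phi> s * \<phi> s' * D - \<phi> x = (\<phi> s * y1 - y1 * \<phi> s) - \<phi> s * (\<phi> s' * y2 - y2 * \<phi> s')"
    unfolding D_def x_def using y1s y2s unfolding y1_def y2_def by (simp add: phsub phmul algebra_simps)
  have ET: "\<phi> s * \<phi> s' * D - \<phi> x \<in> T (Suc d)"
    unfolding E by (intro T_diff T_lmult T_comm y1 y2)
  have "D \<in> T (Suc d) \<longleftrightarrow> \<phi> x \<in> T (Suc d)"
  proof
    assume "D \<in> T (Suc d)"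
    then have "\<phi> s * \<phi> s' * D \<in> T (Suc d)" by (rule T_lmult)
    from T_diff[OF this ET] show "\<phi> x \<in> T (Suc d)" by simp
  next
    assume "\<phi> x \<in> T (Suc d)"
    from T_add[OF ET this] have "\<phi> s * \<phi> s' * D \<in> T (Suc d)" by simp
    then have "iv s' * iv s * (\<phi> s * \<phi> s' * D) \<in> T (Suc d)" by (rule T_lmult)
    moreover have "iv s' * iv s * (\<phi> s * \<phi> s' * D) = D"
    proof -
      have "iv s' * iv s * (\<phi> s * \<phi> s' * D) = iv s' * (iv s * \<phi> s) * \<phi> s' * D" by (simp add: mult.assoc)
      also have "\<dots> = D" using iv(1)[OF s] iv(1)[OF s'] by simp
      finally show ?thesis .
    qed
    ultimately show "D \<in> T (Suc d)" by simp
  qed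
  also have "\<dots> \<longleftrightarrow> frac_rel d S (m, s) (m', s')"
    using phiT[OF x] unfolding frac_rel_def x_def by simp
  finally show "frac_rel d S (m, s) (m', s') \<longleftrightarrow>
     (case (m, s) of (m, s) \<Rightarrow> \<phi> m * iv s) - (case (m', s') of (m, s) \<Rightarrow> \<phi> m * iv s) \<in> T (Suc d)"
    unfolding D_def by simp
qed

end

theorem theorem2p1p6:
  fixes \<iota> :: "complex \<Rightarrow> 'a::ring_1" and Sbar :: "'a set set" and \<phi> :: "'a \<Rightarrow> 'b::ring_1"
  assumes "complex_algebra_str \<iota>"
    and "nc_nilpotent TYPE('a)"
    and "ab_mult_subset Sbar"
    and "ring_of_fractions (ab_preimage Sbar) \<phi>"
  shows "nc_nilpotent TYPE('b) \<and> (\<forall>d. \<exists>f. gr_frac_iso d (ab_preimage Sbar) \<phi> f)"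
proof -
  obtain N where N: "\<forall>i\<ge>N. nc_filt i = ({0} :: 'a set)" using assms(2) unfolding nc_nilpotent_def by blast
  interpret L: loc \<phi> "ab_preimage Sbar" N
  proof
    show "ring_hom_fun \<phi>" using assms(4) unfolding ring_of_fractions_def by blast
    show "\<And>s. s \<in> ab_preimage Sbar \<Longrightarrow> \<exists>u. u * \<phi> s = 1 \<and> \<phi> s * u = 1"
      using assms(4) unfolding ring_of_fractions_def by blast
    show "\<And>q. \<exists>a. \<exists>s\<in>ab_preimage Sbar. q * \<phi> s = \<phi> a"
      using assms(4) unfolding ring_of_fractions_def by blast
    show "\<And>a. \<phi> a = 0 \<Longrightarrow> \<exists>s\<in>ab_preimage Sbar. a * s = 0"
      using assms(4) unfolding ring_of_fractions_def by blast
    show "\<And>s t. s \<in> ab_preimage Sbar \<Longrightarrow> t \<in> ab_preimage Sbar \<Longrightarrow> s * t \<in> ab_preimage Sbar"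
      using assms(3) unfolding ab_mult_subset_def ab_preimage_def by blast
    show "1 \<in> ab_preimage Sbar"
      using assms(3) unfolding ab_mult_subset_def ab_preimage_def by blast
    show "\<And>i. N \<le> i \<Longrightarrow> nc_filt i = ({0} :: 'a set)" using N by blast
  qed
  show ?thesis using L.nilQ L.iso by blast
qed

end
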